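(* Let $L$ be a full-rank lattice in $\mathbb{R}^n$ and $L_0\subseteq L$ a full-rank sublattice. Assume $b_0>2\nu(L_0)$ and let $\lambda$ be drawn uniformly at random from $L\cap[0,b_0)^n$. Then the total variation distance between the distribution of $\lambda+L_0$ on the quotient group $L/L_0$ and the uniform distribution on $L/L_0$ is at most $$1-\frac{(b_0-2\nu(L_0))^n}{(b_0+2\nu(L))^n}.$$
   Context: $\nu(\cdot)$ denotes the covering radius of a lattice with respect to the Euclidean norm. *)

theory Defs
  imports "HOL-Analysis.Analysis" "HOL-Probability.Probability"
begin

definition full_rank_lattice :: "(real ^ 'n) set \<Rightarrow> bool" where
  "full_rank_lattice L \<longleftrightarrow>
     (\<exists>B :: 'n \<Rightarrow> real ^ 'n. inj B \<and> independent (range B) \<and>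
        L = range (\<lambda>c :: 'n \<Rightarrow> int. \<Sum>i\<in>UNIV. of_int (c i) *\<^sub>R B i))"

definition covering_radius :: "(real ^ 'n) set \<Rightarrow> real" where
  "covering_radius L = (SUP x. infdist x L)"

definition coset_of :: "(real ^ 'n) set \<Rightarrow> real ^ 'n \<Rightarrow> (real ^ 'n) set" where
  "coset_of L0 x = (\<lambda>y. x + y) ` L0"

definition quotient_cosets :: "(real ^ 'n) set \<Rightarrow> (real ^ 'n) set \<Rightarrow> (real ^ 'n) set set" where
  "quotient_cosets L L0 = coset_of L0 ` L"

definition tv_dist :: "'a pmf \<Rightarrow> 'a pmf \<Rightarrow> real" where
  "tv_dist p q = (SUP A. \<bar>measure_pmf.prob p A - measure_pmf.prob q A\<bar>)"

definition half_open_box :: "real \<Rightarrow> (real ^ 'n) set" where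
  "half_open_box b = {x. \<forall>i. 0 \<le> x $ i \<and> x $ i < b}"

end

theory Submission
  imports Defs
begin

definition fdom :: "(real^'n) set \<Rightarrow> (real^'n) set \<Rightarrow> bool" where
  "fdom \<Lambda> D \<longleftrightarrow> D \<in> sets lebesgue \<and> (\<forall>y. \<exists>d\<in>D. \<exists>\<mu>\<in>\<Lambda>. y = d + \<mu>) \<and>
     (\<forall>d d' \<mu> \<mu>'. d \<in> D \<longrightarrow> d' \<in> D \<longrightarrow> \<mu> \<in> \<Lambda> \<longrightarrow> \<mu>' \<in> \<Lambda> \<longrightarrow> d + \<mu> = d' + \<mu>' \<longrightarrow> d = d')"

lemma emeasure_transl: "emeasure lebesgue ((+) a ` S) = emeasure lebesgue (S :: (real^'n) set)"
proof -
  have "(+) a ` S = (\<lambda>x. 1 *\<^sub>R x + a) ` S" by (auto simp: add.commute)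
  then show ?thesis using emeasure_lebesgue_affine[of 1 a S] by simp
qed

lemma sets_transl: "S \<in> sets lebesgue \<Longrightarrow> (+) a ` S \<in> sets lebesgue"
  for S :: "(real^'n) set"
  using lebesgue_sets_translation[of S a] by simp

lemma reduce_fdom:
  fixes \<Lambda> D :: "(real^'n) set"
  assumes add: "\<And>a b. a\<in>\<Lambda> \<Longrightarrow> b\<in>\<Lambda> \<Longrightarrow> a + b \<in> \<Lambda>"
    and neg: "\<And>a. a\<in>\<Lambda> \<Longrightarrow> -a \<in> \<Lambda>"
    and cnt: "countable \<Lambda>" and fd: "fdom \<Lambda> D"
    and cov: "\<And>x. \<exists>\<mu>\<in>\<Lambda>. norm (x + \<mu>) \<le> \<rho>"
  shows "\<exists>W. fdom \<Lambda> W \<and> W \<subseteq> cball 0 \<rho> \<and> emeasure lebesgue W = emeasure lebesgue D"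
proof -
  have ne: "\<Lambda> \<noteq> {}" using cov by blast
  define g where "g = from_nat_into \<Lambda>"
  have gL: "g j \<in> \<Lambda>" for j using from_nat_into[OF ne] g_def by auto
  have gsurj: "\<exists>j. g j = \<mu>" if "\<mu> \<in> \<Lambda>" for \<mu>
    using range_from_nat_into[OF ne cnt] that g_def by (metis rangeE)
  define Dj where "Dj j = {x\<in>D. norm (x + g j) \<le> \<rho> \<and> (\<forall>i<j. \<rho> < norm (x + g i))}" for j
  define W where "W = (\<Union>j. (+) (g j) ` Dj j)"
  have Dsets: "D \<in> sets lebesgue" and ex: "\<And>y. \<exists>d\<in>D. \<exists>\<mu>\<in>\<Lambda>. y = d + \<mu>"
    and un: "\<And>d d' \<mu> \<mu>'. d \<in> D \<Longrightarrow> d' \<in> D \<Longrightarrow> \<mu> \<in> \<Lambda> \<Longrightarrow> \<mu>' \<in> \<Lambda> \<Longrightarrow> d + \<mu> = d' + \<mu>' \<Longrightarrow> d = d'"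
    using fd unfolding fdom_def by blast+
  have Djsets: "Dj j \<in> sets lebesgue" for j
  proof -
    have eq: "Dj j = D \<inter> ({x. norm (x + g j) \<le> \<rho>} \<inter> (\<Inter>i\<in>{..<j}. {x. \<rho> < norm (x + g i)}))"
      by (auto simp: Dj_def)
    have "{x. norm (x + g j) \<le> \<rho>} \<in> sets borel" by measurable
    moreover have "open (\<Inter>i\<in>{..<j}. {x. \<rho> < norm (x + g i)})"
      by (intro open_INT) (auto intro!: open_Collect_less continuous_intros)
    then have "(\<Inter>i\<in>{..<j}. {x. \<rho> < norm (x + g i)}) \<in> sets borel" by simp
    ultimately have "({x. norm (x + g j) \<le> \<rho>} \<inter> (\<Inter>i\<in>{..<j}. {x. \<rho> < norm (x + g i)})) \<in> sets lebesgue"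
      by simp
    then show ?thesis unfolding eq using Dsets by blast
  qed
  have Djdisj: "disjoint_family Dj"
    unfolding disjoint_family_on_def
  proof (intro ballI impI)
    fix i j :: nat assume "i \<noteq> j"
    show "Dj i \<inter> Dj j = {}"
    proof (cases "i < j")
      case True then show ?thesis by (force simp: Dj_def)
    next
      case False then have "j < i" using \<open>i \<noteq> j\<close> by simp
      then show ?thesis by (force simp: Dj_def)
    qed
  qed
  have DjUN: "(\<Union>j. Dj j) = D"
  proof
    show "(\<Union>j. Dj j) \<subseteq> D" by (auto simp: Dj_def)
    show "D \<subseteq> (\<Union>j. Dj j)"
    proof
      fix x assume x: "x \<in> D"
      obtain \<mu> where "\<mu> \<in> \<Lambda>" "norm (x + \<mu>) \<le> \<rho>" using cov by blast
      then obtain j0 where j0: "norm (x + g j0) \<le> \<rho>" using gsurj by blast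
      define j where "j = (LEAST j. norm (x + g j) \<le> \<rho>)"
      have "norm (x + g j) \<le> \<rho>" unfolding j_def by (rule LeastI[of _ j0]) (rule j0)
      moreover have "\<rho> < norm (x + g i)" if "i < j" for i
        using not_less_Least[OF that[unfolded j_def]] by simp
      ultimately have "x \<in> Dj j" using x by (auto simp: Dj_def)
      then show "x \<in> (\<Union>j. Dj j)" by blast
    qed
  qed
  have Wdisj: "disjoint_family (\<lambda>j. (+) (g j) ` Dj j)"
    unfolding disjoint_family_on_def
  proof (intro ballI impI)
    fix i j :: nat assume ij: "i \<noteq> j"
    show "(+) (g i) ` Dj i \<inter> (+) (g j) ` Dj j = {}"
    proof (rule ccontr)
      assume "(+) (g i) ` Dj i \<inter> (+) (g j) ` Dj j \<noteq> {}"
      then obtain x x' where x: "x \<in> Dj i" and x': "x' \<in> Dj j" and e: "g i + x = g j + x'" by auto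
      have "x \<in> D" "x' \<in> D" using x x' by (auto simp: Dj_def)
      then have "x = x'" using un[of x x' "g i" "g j"] e gL by (simp add: add.commute)
      then show False using x x' Djdisj ij unfolding disjoint_family_on_def by blast
    qed
  qed
  have Wjsets: "(+) (g j) ` Dj j \<in> sets lebesgue" for j using sets_transl Djsets by blast
  have "emeasure lebesgue W = (\<Sum>j. emeasure lebesgue ((+) (g j) ` Dj j))"
  proof -
    have R: "range (\<lambda>j. (+) (g j) ` Dj j) \<subseteq> sets lebesgue" using Wjsets by blast
    show ?thesis unfolding W_def by (rule suminf_emeasure[OF R Wdisj, symmetric])
  qed
  also have "\<dots> = (\<Sum>j. emeasure lebesgue (Dj j))" by (simp add: emeasure_transl)
  also have "\<dots> = emeasure lebesgue D"
  proof -
    have R: "range Dj \<subseteq> sets lebesgue" using Djsets by blast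
    show ?thesis using suminf_emeasure[OF R Djdisj] DjUN by simp
  qed
  finally have meas: "emeasure lebesgue W = emeasure lebesgue D" .
  have sub: "W \<subseteq> cball 0 \<rho>" by (auto simp: W_def Dj_def add.commute)
  have Wsets: "W \<in> sets lebesgue" unfolding W_def using Wjsets by blast
  have exW: "\<exists>w\<in>W. \<exists>\<mu>\<in>\<Lambda>. y = w + \<mu>" for y
  proof -
    obtain d \<mu> where d: "d \<in> D" "\<mu> \<in> \<Lambda>" "y = d + \<mu>" using ex by blast
    then obtain j where "d \<in> Dj j" using DjUN by blast
    then have "g j + d \<in> W" by (auto simp: W_def)
    moreover have "\<mu> + - g j \<in> \<Lambda>" using add neg gL d by blast
    ultimately show ?thesis using d by (intro bexI[of _ "g j + d"] bexI[of _ "\<mu> + - g j"]) auto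
  qed
  have unW: "w = w'" if hw: "w \<in> W" "w' \<in> W" "\<mu> \<in> \<Lambda>" "\<mu>' \<in> \<Lambda>" "w + \<mu> = w' + \<mu>'" for w w' \<mu> \<mu>'
  proof -
    obtain i d where d: "d \<in> Dj i" "w = g i + d" using hw(1) unfolding W_def by blast
    obtain j d' where d': "d' \<in> Dj j" "w' = g j + d'" using hw(2) unfolding W_def by blast
    have "d \<in> D" "d' \<in> D" using d d' by (auto simp: Dj_def)
    moreover have "d + (g i + \<mu>) = d' + (g j + \<mu>')" using hw(5) d d' by (simp add: ac_simps)
    ultimately have "d = d'" using un add gL hw(3,4) by blast
    then have "i = j" using d d' Djdisj unfolding disjoint_family_on_def by blast
    then show ?thesis using d d' \<open>d = d'\<close> by simp
  qed
  have "fdom \<Lambda> W" unfolding fdom_def using Wsets exW unW by blast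
  then show ?thesis using sub meas by blast
qed

lemma emeasure_cbox_cube:
  assumes "lo \<le> hi"
  shows "emeasure lebesgue (cbox ((\<chi> i. lo)::real^'n) (\<chi> i. hi)) = ennreal ((hi - lo) ^ CARD('n))"
proof -
  have ne: "cbox ((\<chi> i. lo)::real^'n) (\<chi> i. hi) \<noteq> {}"
    using assms by (simp add: interval_eq_empty_cart)
  have "emeasure lebesgue (cbox ((\<chi> i. lo)::real^'n) (\<chi> i. hi)) = emeasure lborel (cbox ((\<chi> i. lo)::real^'n) (\<chi> i. hi))"
    by simp
  also have "\<dots> = ennreal (measure lborel (cbox ((\<chi> i. lo)::real^'n) (\<chi> i. hi)))"
    by (rule emeasure_eq_ennreal_measure) (use emeasure_lborel_cbox_finite in \<open>simp add: less_top\<close>)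
  also have "measure lborel (cbox ((\<chi> i. lo)::real^'n) (\<chi> i. hi)) = (hi - lo) ^ CARD('n)"
    using content_cbox_cart[OF ne] by simp
  finally show ?thesis .
qed

lemma emeasure_box_cube:
  assumes "lo \<le> hi"
  shows "emeasure lebesgue (box ((\<chi> i. lo)::real^'n) (\<chi> i. hi)) = ennreal ((hi - lo) ^ CARD('n))"
proof -
  have "emeasure lebesgue (box ((\<chi> i. lo)::real^'n) (\<chi> i. hi)) = emeasure lborel (box ((\<chi> i. lo)::real^'n) (\<chi> i. hi))"
    by simp
  also have "\<dots> = emeasure lborel (cbox ((\<chi> i. lo)::real^'n) (\<chi> i. hi))"
    by (simp add: emeasure_lborel_box_eq emeasure_lborel_cbox_eq)
  also have "\<dots> = emeasure lebesgue (cbox ((\<chi> i. lo)::real^'n) (\<chi> i. hi))" by simp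
  finally show ?thesis using emeasure_cbox_cube[OF assms] by simp
qed

lemma packing:
  fixes \<Lambda> W :: "(real^'n) set"
  assumes fd: "fdom \<Lambda> W" and sub: "W \<subseteq> cball 0 \<rho>" and fin: "finite F" and FL: "F \<subseteq> \<Lambda>"
    and bx: "\<forall>z\<in>F. \<forall>i. lo \<le> z$i \<and> z$i \<le> hi"
  shows "of_nat (card F) * emeasure lebesgue W \<le> emeasure lebesgue (cbox ((\<chi> i. lo - \<rho>)::real^'n) (\<chi> i. hi + \<rho>))"
proof -
  have Ws: "W \<in> sets lebesgue"
    and un: "\<And>d d' \<mu> \<mu>'. d \<in> W \<Longrightarrow> d' \<in> W \<Longrightarrow> \<mu> \<in> \<Lambda> \<Longrightarrow> \<mu>' \<in> \<Lambda> \<Longrightarrow> d + \<mu> = d' + \<mu>' \<Longrightarrow> d = d'"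
    using fd unfolding fdom_def by blast+
  have disj: "disjoint_family_on (\<lambda>z. (+) z ` W) F"
    unfolding disjoint_family_on_def
  proof (intro ballI impI)
    fix z z' assume z: "z \<in> F" "z' \<in> F" "z \<noteq> z'"
    show "(+) z ` W \<inter> (+) z' ` W = {}"
    proof (rule ccontr)
      assume "(+) z ` W \<inter> (+) z' ` W \<noteq> {}"
      then obtain w w' where w: "w \<in> W" "w' \<in> W" "z + w = z' + w'" by auto
      then have "w = w'" using un[of w w' z z'] z FL by (auto simp: add.commute)
      then show False using w z by simp
    qed
  qed
  have "of_nat (card F) * emeasure lebesgue W = (\<Sum>z\<in>F. emeasure lebesgue ((+) z ` W))"
    by (simp add: emeasure_transl)
  also have "\<dots> = emeasure lebesgue (\<Union>z\<in>F. (+) z ` W)"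
    by (rule sum_emeasure) (use Ws sets_transl disj fin in auto)
  also have "\<dots> \<le> emeasure lebesgue (cbox ((\<chi> i. lo - \<rho>)::real^'n) (\<chi> i. hi + \<rho>))"
  proof (rule emeasure_mono)
    show "(\<Union>z\<in>F. (+) z ` W) \<subseteq> cbox (\<chi> i. lo - \<rho>) (\<chi> i. hi + \<rho>)"
    proof
      fix x assume "x \<in> (\<Union>z\<in>F. (+) z ` W)"
      then obtain z w where zw: "z \<in> F" "w \<in> W" "x = z + w" by blast
      have "\<bar>w$i\<bar> \<le> \<rho>" for i using sub zw(2) component_le_norm_cart[of w i] by auto
      then show "x \<in> cbox (\<chi> i. lo - \<rho>) (\<chi> i. hi + \<rho>)"
        unfolding mem_box_cart
      proof (intro allI)
        fix i
        have "\<bar>w$i\<bar> \<le> \<rho>" using \<open>\<And>i. \<bar>w$i\<bar> \<le> \<rho>\<close> by blast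
        moreover have "lo \<le> z$i \<and> z$i \<le> hi" using bx zw(1) by blast
        ultimately show "(\<chi> i. lo - \<rho>) $ i \<le> x $ i \<and> x $ i \<le> (\<chi> i. hi + \<rho>) $ i"
          using zw(3) by (simp add: abs_le_iff)
      qed
    qed
  qed simp
  finally show ?thesis .
qed

lemma covering:
  fixes \<Lambda> W :: "(real^'n) set"
  assumes fd: "fdom \<Lambda> W" and sub: "W \<subseteq> cball 0 \<rho>" and fin: "finite F"
    and cond: "\<And>\<mu>. \<mu> \<in> \<Lambda> \<Longrightarrow> (\<forall>i. 0 < (a + \<mu>)$i \<and> (a + \<mu>)$i < b) \<Longrightarrow> a + \<mu> \<in> F"
  shows "emeasure lebesgue (box ((\<chi> i. \<rho>)::real^'n) (\<chi> i. b - \<rho>)) \<le> of_nat (card F) * emeasure lebesgue W"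
proof -
  have Ws: "W \<in> sets lebesgue" and ex: "\<And>y. \<exists>d\<in>W. \<exists>\<mu>\<in>\<Lambda>. y = d + \<mu>"
    using fd unfolding fdom_def by blast+
  have "box ((\<chi> i. \<rho>)::real^'n) (\<chi> i. b - \<rho>) \<subseteq> (\<Union>z\<in>F. (+) z ` W)"
  proof
    fix x :: "real^'n" assume x: "x \<in> box (\<chi> i. \<rho>) (\<chi> i. b - \<rho>)"
    obtain w \<mu> where w: "w \<in> W" "\<mu> \<in> \<Lambda>" "x - a = w + \<mu>" using ex by blast
    have "\<bar>w$i\<bar> \<le> \<rho>" for i using sub w(1) component_le_norm_cart[of w i] by auto
    moreover have "a + \<mu> = x - w" using w(3) by (simp add: algebra_simps)
    ultimately have "\<forall>i. 0 < (a + \<mu>)$i \<and> (a + \<mu>)$i < b"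
    proof (intro allI)
      fix i
      assume h1: "\<And>i. \<bar>w$i\<bar> \<le> \<rho>" and h2: "a + \<mu> = x - w"
      have "\<rho> < x$i \<and> x$i < b - \<rho>" using x unfolding mem_box_cart by simp
      then show "0 < (a + \<mu>)$i \<and> (a + \<mu>)$i < b" using h1[of i] h2 by (simp add: abs_le_iff)
    qed
    then have "a + \<mu> \<in> F" using cond w(2) by blast
    moreover have "x = (a + \<mu>) + w" using w(3) by (simp add: algebra_simps)
    ultimately show "x \<in> (\<Union>z\<in>F. (+) z ` W)" using w(1) by blast
  qed
  then have "emeasure lebesgue (box ((\<chi> i. \<rho>)::real^'n) (\<chi> i. b - \<rho>)) \<le> emeasure lebesgue (\<Union>z\<in>F. (+) z ` W)"
    by (intro emeasure_mono) (use Ws sets_transl fin in auto)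
  also have "\<dots> \<le> (\<Sum>z\<in>F. emeasure lebesgue ((+) z ` W))"
    by (rule emeasure_subadditive_finite) (use Ws sets_transl fin in auto)
  also have "\<dots> = of_nat (card F) * emeasure lebesgue W"
    by (simp add: emeasure_transl)
  finally show ?thesis .
qed

lemma finite_boxed:
  fixes \<Lambda> W :: "(real^'n) set"
  assumes fd: "fdom \<Lambda> W" and sub: "W \<subseteq> cball 0 \<rho>" and pos: "0 < emeasure lebesgue W"
    and FL: "F \<subseteq> \<Lambda>" and bx: "\<forall>z\<in>F. \<forall>i. lo \<le> z$i \<and> z$i \<le> hi"
  shows "finite F"
proof (rule ccontr)
  assume inf: "infinite F"
  define c where "c = measure lebesgue (cbox ((\<chi> i. lo - \<rho>)::real^'n) (\<chi> i. hi + \<rho>))"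
  have C: "emeasure lebesgue (cbox ((\<chi> i. lo - \<rho>)::real^'n) (\<chi> i. hi + \<rho>)) = ennreal c"
  proof -
    have "emeasure lebesgue (cbox ((\<chi> i. lo - \<rho>)::real^'n) (\<chi> i. hi + \<rho>)) = emeasure lborel (cbox ((\<chi> i. lo - \<rho>)::real^'n) (\<chi> i. hi + \<rho>))"
      by simp
    also have "\<dots> < \<infinity>" by (rule emeasure_lborel_cbox_finite)
    finally show ?thesis unfolding c_def by (intro emeasure_eq_ennreal_measure) (simp add: less_top)
  qed
  have bound: "of_nat m * emeasure lebesgue W \<le> ennreal c" for m
  proof -
    obtain F' where F': "finite F'" "card F' = m" "F' \<subseteq> F" using infinite_arbitrarily_large[OF inf] by blast
    show ?thesis using packing[OF fd sub F'(1) _ , of lo hi] F' FL bx C by auto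
  qed
  have "emeasure lebesgue W \<le> ennreal c" using bound[of 1] by simp
  then obtain w where w: "emeasure lebesgue W = ennreal w" "w \<ge> 0"
    by (metis ennreal_cases ennreal_less_top infinity_ennreal_def not_le top_greatest order.strict_iff_not)
  have wpos: "w > 0" using pos w by simp
  have c0: "c \<ge> 0" unfolding c_def by simp
  define m where "m = nat \<lceil>c / w\<rceil> + 1"
  have "of_nat m * ennreal w = ennreal (real m * w)"
    using w(2) by (simp add: ennreal_mult ennreal_of_nat_eq_real_of_nat)
  then have "real m * w \<le> c" using bound[of m] w c0 by (simp add: ennreal_le_iff)
  moreover have "c < real m * w"
  proof -
    have "c / w < real m" unfolding m_def by linarith
    then show ?thesis using wpos by (simp add: divide_less_eq)
  qed
  ultimately show False by simp
qed

lemma lattice_rep: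
  fixes L :: "(real^'n) set"
  assumes "full_rank_lattice L"
  shows "\<exists>(T::real^'n \<Rightarrow> real^'n) S. linear T \<and> linear S \<and> (\<forall>x. S (T x) = x) \<and> (\<forall>x. T (S x) = x) \<and>
           L = T ` {t. \<forall>i. t$i \<in> \<int>}"
proof -
  obtain B :: "'n \<Rightarrow> real^'n" where B: "inj B" "independent (range B)"
    and L: "L = range (\<lambda>c :: 'n \<Rightarrow> int. \<Sum>i\<in>UNIV. of_int (c i) *\<^sub>R B i)"
    using assms unfolding full_rank_lattice_def by blast
  define T where "T t = (\<Sum>i\<in>UNIV. (t$i) *\<^sub>R B i)" for t :: "real^'n"
  have lin: "linear T"
    unfolding linear_iff T_def by (simp add: algebra_simps sum.distrib scaleR_sum_right)
  have inj: "inj T"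
    unfolding linear_injective_0[OF lin]
  proof (intro allI impI)
    fix t assume t: "T t = 0"
    define c where "c v = t $ (inv B v)" for v
    have "(\<Sum>v\<in>range B. c v *\<^sub>R v) = (\<Sum>i\<in>UNIV. c (B i) *\<^sub>R B i)"
      using sum.reindex[OF B(1), of "\<lambda>v. c v *\<^sub>R v"] by simp
    also have "\<dots> = T t" unfolding T_def c_def using B(1) by simp
    finally have "(\<Sum>v\<in>range B. c v *\<^sub>R v) = 0" using t by simp
    then have "\<forall>v\<in>range B. c v = 0" using B(2) unfolding independent_explicit by blast
    then have "t $ i = 0" for i using B(1) unfolding c_def by auto
    then show "t = 0" by (simp add: vec_eq_iff)
  qed
  obtain S where S: "linear S" "\<forall>x. S (T x) = x" "\<forall>x. T (S x) = x"
    using linear_injective_isomorphism[OF lin inj] by auto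
  have "L = T ` {t. \<forall>i. t$i \<in> \<int>}"
  proof
    show "L \<subseteq> T ` {t. \<forall>i. t$i \<in> \<int>}"
    proof
      fix x assume "x \<in> L"
      then obtain c :: "'n \<Rightarrow> int" where x: "x = (\<Sum>i\<in>UNIV. of_int (c i) *\<^sub>R B i)" using L by blast
      have "x = T (\<chi> i. of_int (c i))" unfolding x T_def by simp
      moreover have "(\<chi> i. (of_int (c i) :: real)) \<in> {t. \<forall>i. t$i \<in> \<int>}" by simp
      ultimately show "x \<in> T ` {t. \<forall>i. t$i \<in> \<int>}" by blast
    qed
    show "T ` {t. \<forall>i. t$i \<in> \<int>} \<subseteq> L"
    proof
      fix x assume "x \<in> T ` {t. \<forall>i. t$i \<in> \<int>}"
      then obtain t where t: "\<forall>i. t$i \<in> \<int>" "x = T t" by blast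
      have fl: "of_int \<lfloor>t$i\<rfloor> = t$i" for i using t(1) by (metis Ints_cases floor_of_int)
      have "x = (\<Sum>i\<in>UNIV. of_int ((\<lambda>i. \<lfloor>t$i\<rfloor>) i) *\<^sub>R B i)" by (simp only: fl T_def t(2))
      then show "x \<in> L" unfolding L by (auto intro!: image_eqI[where x="\<lambda>i. \<lfloor>t$i\<rfloor>"])
    qed
  qed
  then show ?thesis using lin S by (intro exI[of _ T] exI[of _ S]) auto
qed

lemma Ints_abs_less1: "(x::real) \<in> \<int> \<Longrightarrow> \<bar>x\<bar> < 1 \<Longrightarrow> x = 0"
proof -
  assume "x \<in> \<int>" "\<bar>x\<bar> < 1"
  then obtain k where k: "x = of_int k" by (auto elim: Ints_cases)
  then have "\<bar>k\<bar> < 1" using \<open>\<bar>x\<bar> < 1\<close> by linarith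
  then show "x = 0" using k by simp
qed

lemma lattice_facts:
  fixes L :: "(real^'n) set"
  assumes "full_rank_lattice L"
  shows "0 \<in> L" "\<And>a b. a \<in> L \<Longrightarrow> b \<in> L \<Longrightarrow> a + b \<in> L" "\<And>a. a \<in> L \<Longrightarrow> -a \<in> L"
    "countable L" "closed L"
    "\<exists>P. fdom L P \<and> 0 < emeasure lebesgue P \<and> emeasure lebesgue P < \<infinity> \<and> bounded P"
proof -
  obtain T S :: "real^'n \<Rightarrow> real^'n" where TS: "linear T" "linear S" "\<forall>x. S (T x) = x" "\<forall>x. T (S x) = x"
    and L: "L = T ` {t. \<forall>i. t$i \<in> \<int>}"
    using lattice_rep[OF assms] by blast
  define Z where "Z = {t :: real^'n. \<forall>i. t$i \<in> \<int>}"
  have LZ: "L = T ` Z" using L Z_def by simp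
  show "0 \<in> L" unfolding LZ Z_def using linear_0[OF TS(1)] by (intro image_eqI[of _ _ 0]) auto
  show "a + b \<in> L" if h: "a \<in> L" "b \<in> L" for a b
  proof -
    obtain s t where "s \<in> Z" "t \<in> Z" "a = T s" "b = T t" using h LZ by blast
    then show ?thesis unfolding LZ Z_def using linear_add[OF TS(1)]
      by (intro image_eqI[of _ _ "s + t"]) auto
  qed
  show "-a \<in> L" if h: "a \<in> L" for a
  proof -
    obtain s where "s \<in> Z" "a = T s" using h LZ by blast
    then show ?thesis unfolding LZ Z_def using linear_neg[OF TS(1)]
      by (intro image_eqI[of _ _ "-s"]) auto
  qed
  have "Z = range (\<lambda>c :: 'n \<Rightarrow> int. \<chi> i. of_int (c i))"
  proof
    show "Z \<subseteq> range (\<lambda>c :: 'n \<Rightarrow> int. \<chi> i. of_int (c i))"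
    proof
      fix t assume "t \<in> Z"
      then have fl: "of_int \<lfloor>t$i\<rfloor> = t$i" for i unfolding Z_def by (metis Ints_cases floor_of_int mem_Collect_eq)
      have "t = (\<chi> i. of_int ((\<lambda>i. \<lfloor>t$i\<rfloor>) i))" by (simp add: vec_eq_iff fl)
      then show "t \<in> range (\<lambda>c :: 'n \<Rightarrow> int. \<chi> i. of_int (c i))" by (auto intro!: image_eqI[where x="\<lambda>i. \<lfloor>t$i\<rfloor>"])
    qed
  qed (auto simp: Z_def)
  then show "countable L" unfolding LZ by simp
  have "closed Z"
  proof -
    have "Z = (\<Inter>i. (\<lambda>t. t$i) -` \<int>)" by (auto simp: Z_def)
    moreover have "closed ((\<lambda>t::real^'n. t$i) -` \<int>)" for i
      by (rule continuous_closed_vimage) (auto intro: continuous_intros)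
    ultimately show ?thesis by auto
  qed
  have injT: "inj T" using TS(3) by (metis injI)
  show "closed L" unfolding LZ by (rule closed_injective_linear_image[OF \<open>closed Z\<close> TS(1) injT])
  define P where "P = {y. \<forall>i. 0 \<le> S y $ i \<and> S y $ i < 1}"
  have Sb: "S \<in> borel_measurable borel"
    using TS(2) by (intro borel_measurable_continuous_onI linear_continuous_on) (simp add: linear_conv_bounded_linear)
  have Pb: "P \<in> sets borel" unfolding P_def using Sb by measurable
  have exP: "\<exists>d\<in>P. \<exists>\<mu>\<in>L. y = d + \<mu>" for y
  proof -
    define t where "t = S y"
    define m where "m = (\<chi> i. (of_int \<lfloor>t$i\<rfloor> :: real))"
    have "y = T (t - m) + T m" unfolding t_def using TS linear_diff[OF TS(1)] by simp
    moreover have "T (t - m) \<in> P"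
    proof -
      have "0 \<le> (t - m)$i \<and> (t - m)$i < 1" for i
        using floor_correct[of "t$i"] by (simp add: m_def) linarith
      then show ?thesis unfolding P_def using TS(3) by simp
    qed
    moreover have "T m \<in> L" unfolding LZ Z_def m_def by auto
    ultimately show ?thesis by blast
  qed
  have unP: "d = d'" if h: "d \<in> P" "d' \<in> P" "\<mu> \<in> L" "\<mu>' \<in> L" "d + \<mu> = d' + \<mu>'" for d d' \<mu> \<mu>'
  proof -
    obtain m m' where m: "m \<in> Z" "m' \<in> Z" "\<mu> = T m" "\<mu>' = T m'" using h(3,4) LZ by blast
    have "S d + m = S d' + m'" using arg_cong[OF h(5), of S] linear_add[OF TS(2)] m TS(3) by simp
    then have "(S d + m) $ i = (S d' + m') $ i" for i by simp
    then have e0: "S d $ i + m $ i = S d' $ i + m' $ i" for i by simp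
    have e: "S d $ i - S d' $ i = m' $ i - m $ i" for i using e0[of i] by linarith
    have "S d $ i = S d' $ i" for i
    proof -
      have "m' $ i - m $ i \<in> \<int>" using m unfolding Z_def by auto
      moreover have "\<bar>S d $ i - S d' $ i\<bar> < 1"
      proof -
        have "0 \<le> S d $ i \<and> S d $ i < 1" "0 \<le> S d' $ i \<and> S d' $ i < 1"
          using h(1,2) unfolding P_def by auto
        then show ?thesis by linarith
      qed
      ultimately show ?thesis using e[of i] Ints_abs_less1 by force
    qed
    then have "S d = S d'" by (simp add: vec_eq_iff)
    then show ?thesis using TS(4) by metis
  qed
  have fd: "fdom L P" unfolding fdom_def using Pb exP unP by auto
  have bP: "bounded P"
  proof -
    have "P \<subseteq> T ` cbox 0 1" unfolding P_def
    proof
      fix y assume "y \<in> {y. \<forall>i. 0 \<le> S y $ i \<and> S y $ i < 1}"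
      then have "S y \<in> cbox 0 1" by (auto simp: mem_box_cart less_imp_le)
      then show "y \<in> T ` cbox 0 1" using TS(4) by (metis image_eqI)
    qed
    moreover have "bounded (T ` cbox 0 1)"
      using TS(1) by (intro bounded_linear_image bounded_cbox) (simp add: linear_conv_bounded_linear)
    ultimately show ?thesis by (rule bounded_subset[rotated])
  qed
  have fin: "emeasure lebesgue P < \<infinity>" using emeasure_bounded_finite[OF bP] Pb by simp
  have pos: "0 < emeasure lebesgue P"
  proof (rule ccontr)
    assume "\<not> 0 < emeasure lebesgue P"
    then have "P \<in> null_sets lebesgue" using Pb by (simp add: null_sets_def)
    then have "(+) \<mu> ` P \<in> null_sets lebesgue" for \<mu>
      using sets_transl emeasure_transl[of \<mu> P] unfolding null_sets_def by auto
    then have "(\<Union>\<mu>\<in>L. (+) \<mu> ` P) \<in> null_sets lebesgue"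
      using \<open>countable L\<close> by (intro null_sets_UN') auto
    moreover have "(\<Union>\<mu>\<in>L. (+) \<mu> ` P) = UNIV" using exP by (force simp: add.commute)
    ultimately have "emeasure lebesgue (UNIV :: (real^'n) set) = 0" by auto
    moreover have "emeasure lebesgue (UNIV :: (real^'n) set) = \<infinity>"
      using emeasure_lborel_UNIV[where 'a="real^'n"] by simp
    ultimately show False by simp
  qed
  show "\<exists>P. fdom L P \<and> 0 < emeasure lebesgue P \<and> emeasure lebesgue P < \<infinity> \<and> bounded P"
    using fd pos fin bP by blast
qed

lemma covering_radius_facts:
  fixes L :: "(real^'n) set"
  assumes "full_rank_lattice L"
  shows "covering_radius L \<ge> 0" "\<And>x. \<exists>\<mu>\<in>L. norm (x + \<mu>) \<le> covering_radius L"
proof -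
  obtain P where fd: "fdom L P" and bP: "bounded P"
    using lattice_facts(6)[OF assms] by blast
  obtain R where R: "\<forall>p\<in>P. norm p \<le> R" using bP bounded_iff by blast
  have ne: "L \<noteq> {}" using lattice_facts(1)[OF assms] by blast
  have le: "infdist x L \<le> R" for x
  proof -
    obtain d \<mu> where "d \<in> P" "\<mu> \<in> L" "x = d + \<mu>" using fd unfolding fdom_def by blast
    then have "infdist x L \<le> dist x \<mu>" by (simp add: infdist_le)
    also have "dist x \<mu> = norm d" using \<open>x = d + \<mu>\<close> by (simp add: dist_norm)
    finally show ?thesis using R \<open>d \<in> P\<close> by force
  qed
  have bdd: "bdd_above (range (\<lambda>x. infdist x L))" using le by (intro bdd_aboveI2) auto
  have up: "infdist x L \<le> covering_radius L" for x
    unfolding covering_radius_def by (rule cSUP_upper[OF _ bdd]) simp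
  show "covering_radius L \<ge> 0" using up[of 0] infdist_nonneg[of 0 L] by linarith
  show "\<exists>\<mu>\<in>L. norm (x + \<mu>) \<le> covering_radius L" for x
  proof -
    obtain \<mu> where "\<mu> \<in> L" "infdist x L = dist x \<mu>"
      using infdist_attains_inf[OF lattice_facts(5)[OF assms] ne] by blast
    moreover have "-\<mu> \<in> L" using lattice_facts(3)[OF assms] \<open>\<mu> \<in> L\<close> by blast
    ultimately show ?thesis using up[of x] by (intro bexI[of _ "-\<mu>"]) (auto simp: dist_norm)
  qed
qed

lemma coset_eq:
  fixes \<Lambda> :: "(real^'n) set"
  assumes z: "0 \<in> \<Lambda>" and add: "\<And>a b. a\<in>\<Lambda> \<Longrightarrow> b\<in>\<Lambda> \<Longrightarrow> a + b \<in> \<Lambda>"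
    and neg: "\<And>a. a\<in>\<Lambda> \<Longrightarrow> -a \<in> \<Lambda>"
  shows "coset_of \<Lambda> a = coset_of \<Lambda> b \<longleftrightarrow> a - b \<in> \<Lambda>"
proof
  assume e: "coset_of \<Lambda> a = coset_of \<Lambda> b"
  have "a \<in> coset_of \<Lambda> a" unfolding coset_of_def using z by (intro image_eqI[of _ _ 0]) auto
  then have "a \<in> coset_of \<Lambda> b" using e by simp
  then obtain y where "y \<in> \<Lambda>" "a = b + y" unfolding coset_of_def by blast
  then show "a - b \<in> \<Lambda>" by simp
next
  assume h: "a - b \<in> \<Lambda>"
  show "coset_of \<Lambda> a = coset_of \<Lambda> b"
  proof
    show "coset_of \<Lambda> a \<subseteq> coset_of \<Lambda> b"
    proof
      fix x assume "x \<in> coset_of \<Lambda> a"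
      then obtain z where "z \<in> \<Lambda>" "x = a + z" unfolding coset_of_def by blast
      moreover have "(a - b) + z \<in> \<Lambda>" using add h \<open>z \<in> \<Lambda>\<close> by blast
      ultimately show "x \<in> coset_of \<Lambda> b" unfolding coset_of_def
        by (intro image_eqI[of _ _ "(a - b) + z"]) (auto simp: algebra_simps)
    qed
    show "coset_of \<Lambda> b \<subseteq> coset_of \<Lambda> a"
    proof
      fix x assume "x \<in> coset_of \<Lambda> b"
      then obtain z where "z \<in> \<Lambda>" "x = b + z" unfolding coset_of_def by blast
      moreover have "z + - (a - b) \<in> \<Lambda>" using add neg h \<open>z \<in> \<Lambda>\<close> by blast
      ultimately show "x \<in> coset_of \<Lambda> a" unfolding coset_of_def
        by (intro image_eqI[of _ _ "z + - (a - b)"]) (auto simp: algebra_simps)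
    qed
  qed
qed

lemma ennreal_nat_mult: "0 \<le> v \<Longrightarrow> of_nat m * ennreal v = ennreal (real m * v)"
  by (simp add: ennreal_mult ennreal_of_nat_eq_real_of_nat)

theorem lemma7p5:
  fixes L L0 :: "(real ^ 'n) set" and b0 :: real
  assumes "full_rank_lattice L"
    and "full_rank_lattice L0"
    and "L0 \<subseteq> L"
    and "b0 > 2 * covering_radius L0"
  shows "tv_dist (map_pmf (coset_of L0) (pmf_of_set (L \<inter> half_open_box b0)))
                 (pmf_of_set (quotient_cosets L L0))
         \<le> 1 - (b0 - 2 * covering_radius L0) ^ CARD('n) / (b0 + 2 * covering_radius L) ^ CARD('n)"
proof -
  note fL = lattice_facts[OF assms(1)] and fL0 = lattice_facts[OF assms(2)]
  note cL = covering_radius_facts[OF assms(1)] and cL0 = covering_radius_facts[OF assms(2)]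
  define \<nu> where "\<nu> = covering_radius L"
  define \<nu>0 where "\<nu>0 = covering_radius L0"
  define n where "n = CARD('n)"
  have \<nu>: "\<nu> \<ge> 0" "\<And>x. \<exists>\<mu>\<in>L. norm (x + \<mu>) \<le> \<nu>" using cL unfolding \<nu>_def by auto
  have \<nu>0: "\<nu>0 \<ge> 0" "\<And>x. \<exists>\<mu>\<in>L0. norm (x + \<mu>) \<le> \<nu>0" using cL0 unfolding \<nu>0_def by auto
  have b0: "b0 > 2 * \<nu>0" using assms(4) \<nu>0_def by simp
  obtain P where P: "fdom L P" "0 < emeasure lebesgue P" "emeasure lebesgue P < \<infinity>"
    using fL(6) by blast
  obtain v where v: "emeasure lebesgue P = ennreal v" "v \<ge> 0"
    using P(3) by (cases "emeasure lebesgue P") auto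
  have vpos: "v > 0" using P(2) v by simp
  obtain W where W: "fdom L W" "W \<subseteq> cball 0 \<nu>" "emeasure lebesgue W = emeasure lebesgue P"
    using reduce_fdom[OF fL(2) fL(3) fL(4) P(1) \<nu>(2)] by blast
  have Wpos: "0 < emeasure lebesgue W" using W(3) P(2) by simp
  define X where "X = L \<inter> half_open_box b0"
  have Xbox: "\<forall>z\<in>X. \<forall>i. 0 \<le> z$i \<and> z$i \<le> b0"
    unfolding X_def half_open_box_def by (auto simp: less_imp_le)
  have finX: "finite X" using finite_boxed[OF W(1) W(2) Wpos _ Xbox] X_def by blast
  have "0 \<in> X" using fL(1) b0 \<nu>0(1) unfolding X_def half_open_box_def by auto
  then have Xne: "X \<noteq> {}" by blast
  define N where "N = card X"
  have Npos: "N > 0" unfolding N_def using finX Xne by (simp add: card_gt_0_iff)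
  define C where "C = (b0 + 2 * \<nu>) ^ n"
  have "b0 + 2 * \<nu> > 0" using b0 \<nu>(1) \<nu>0(1) by linarith
  then have Cpos: "C > 0" unfolding C_def by simp
  have upper: "real N * v \<le> C"
  proof -
    have "of_nat N * emeasure lebesgue W \<le> emeasure lebesgue (cbox ((\<chi> i. 0 - \<nu>)::real^'n) (\<chi> i. b0 + \<nu>))"
      using packing[OF W(1) W(2) finX _ Xbox] X_def N_def by blast
    also have "\<dots> = ennreal C"
      using emeasure_cbox_cube[of "0 - \<nu>" "b0 + \<nu>"] b0 \<nu>(1) \<nu>0(1) unfolding C_def n_def
      by (simp add: algebra_simps)
    finally show ?thesis using W(3) v ennreal_nat_mult[OF v(2), of N] Cpos by (simp add: ennreal_le_iff)
  qed
  have z0: "0 \<in> L0" and add0: "\<And>a b. a\<in>L0 \<Longrightarrow> b\<in>L0 \<Longrightarrow> a + b \<in> L0"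
    and neg0: "\<And>a. a\<in>L0 \<Longrightarrow> -a \<in> L0" using fL0 by auto
  note ceq = coset_eq[OF z0 add0 neg0]
  define Q where "Q = quotient_cosets L L0"
  have QL: "Q = coset_of L0 ` L" unfolding Q_def quotient_cosets_def by simp
  define K where "K = L \<inter> {z. \<forall>i. - \<nu>0 \<le> z$i \<and> z$i \<le> \<nu>0}"
  have finK: "finite K"
    by (rule finite_boxed[OF W(1) W(2) Wpos, of K "-\<nu>0" \<nu>0]) (auto simp: K_def)
  have "Q \<subseteq> coset_of L0 ` K"
  proof
    fix c assume "c \<in> Q"
    then obtain a where a: "a \<in> L" "c = coset_of L0 a" using QL by blast
    obtain \<mu> where \<mu>: "\<mu> \<in> L0" "norm (a + \<mu>) \<le> \<nu>0" using \<nu>0(2) by blast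
    have "a + \<mu> \<in> L" using fL(2) a(1) \<mu>(1) assms(3) by blast
    moreover have "\<bar>(a + \<mu>)$i\<bar> \<le> \<nu>0" for i using \<mu>(2) component_le_norm_cart[of "a + \<mu>" i] by linarith
    ultimately have "a + \<mu> \<in> K" unfolding K_def
    proof (intro IntI CollectI allI)
      fix i
      show "- \<nu>0 \<le> (a + \<mu>)$i \<and> (a + \<mu>)$i \<le> \<nu>0"
        using \<open>\<And>i. \<bar>(a + \<mu>)$i\<bar> \<le> \<nu>0\<close>[of i] by (auto simp: abs_le_iff)
    qed
    moreover have "coset_of L0 (a + \<mu>) = coset_of L0 a" using ceq[of "a + \<mu>" a] \<mu>(1) by simp
    then have "coset_of L0 (a + \<mu>) = c" using a(2) by simp
    ultimately show "c \<in> coset_of L0 ` K" by blast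
  qed
  then have finQ: "finite Q" using finK finite_surj by blast
  have Qne: "Q \<noteq> {}" using QL fL(1) by blast
  define k where "k = card Q"
  have kpos: "k > 0" unfolding k_def using finQ Qne by (simp add: card_gt_0_iff)
  define rep where "rep c = inv_into L (coset_of L0) c" for c
  have rep: "rep c \<in> L" "coset_of L0 (rep c) = c" if "c \<in> Q" for c
  proof -
    have cc: "c \<in> coset_of L0 ` L" using that QL by simp
    show "rep c \<in> L" unfolding rep_def by (rule inv_into_into[OF cc])
    show "coset_of L0 (rep c) = c" unfolding rep_def by (rule f_inv_into_f[OF cc])
  qed
  define R where "R = rep ` Q"
  have injrep: "inj_on rep Q" by (rule inj_on_inverseI[where g="coset_of L0"]) (use rep in auto)
  have cardR: "card R = k" unfolding R_def k_def using card_image[OF injrep] .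
  have finR: "finite R" unfolding R_def using finQ by simp
  have RL: "R \<subseteq> L" unfolding R_def using rep by blast
  define D0 where "D0 = (\<Union>r\<in>R. (+) r ` P)"
  have Psets: "P \<in> sets lebesgue" and exP: "\<And>y. \<exists>d\<in>P. \<exists>\<mu>\<in>L. y = d + \<mu>"
    and unP: "\<And>d d' \<mu> \<mu>'. d \<in> P \<Longrightarrow> d' \<in> P \<Longrightarrow> \<mu> \<in> L \<Longrightarrow> \<mu>' \<in> L \<Longrightarrow> d + \<mu> = d' + \<mu>' \<Longrightarrow> d = d'"
    using P(1) unfolding fdom_def by blast+
  have repeq: "r = r'" if hr: "r \<in> R" "r' \<in> R" "r - r' \<in> L0" for r r'
  proof -
    obtain c c' where "c \<in> Q" "c' \<in> Q" "r = rep c" "r' = rep c'" using hr(1,2) R_def by blast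
    moreover have "coset_of L0 r = coset_of L0 r'" using ceq[of r r'] hr(3) by simp
    ultimately have "c = c'" using rep(2) by simp
    then show ?thesis using \<open>r = rep c\<close> \<open>r' = rep c'\<close> by simp
  qed
  have fdD0: "fdom L0 D0"
    unfolding fdom_def
  proof (intro conjI allI impI)
    show "D0 \<in> sets lebesgue" unfolding D0_def using finR Psets sets_transl by blast
    show "\<exists>d\<in>D0. \<exists>\<mu>\<in>L0. y = d + \<mu>" for y
    proof -
      obtain p lam where p: "p \<in> P" "lam \<in> L" "y = p + lam" using exP by blast
      define c where "c = coset_of L0 lam"
      have c: "c \<in> Q" using QL p(2) c_def by blast
      have "coset_of L0 lam = coset_of L0 (rep c)" using rep(2)[OF c] c_def by simp
      then have "lam - rep c \<in> L0" using ceq[of lam "rep c"] by simp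
      moreover have "rep c + p \<in> D0" unfolding D0_def R_def using c p(1) by blast
      moreover have "y = (rep c + p) + (lam - rep c)" using p(3) by (simp add: algebra_simps)
      ultimately show ?thesis by blast
    qed
    fix d d' \<mu> \<mu>'
    assume h: "d \<in> D0" "d' \<in> D0" "\<mu> \<in> L0" "\<mu>' \<in> L0" "d + \<mu> = d' + \<mu>'"
    obtain r p where rp: "r \<in> R" "p \<in> P" "d = r + p" using h(1) unfolding D0_def by blast
    obtain r' p' where rp': "r' \<in> R" "p' \<in> P" "d' = r' + p'" using h(2) unfolding D0_def by blast
    have "r + \<mu> \<in> L" "r' + \<mu>' \<in> L" using fL(2) RL rp(1) rp'(1) h(3,4) assms(3) by blast+
    moreover have "p + (r + \<mu>) = p' + (r' + \<mu>')" using h(5) rp rp' by (simp add: algebra_simps)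
    ultimately have pp: "p = p'" using unP rp(2) rp'(2) by blast
    then have "r + \<mu> = r' + \<mu>'" using h(5) rp rp' by (simp add: algebra_simps)
    then have "r - r' = \<mu>' + - \<mu>" by (simp add: algebra_simps)
    moreover have "\<mu>' + - \<mu> \<in> L0" using add0 neg0 h(3,4) by blast
    ultimately have "r - r' \<in> L0" by simp
    then have "r = r'" using repeq rp(1) rp'(1) by blast
    then show "d = d'" using rp rp' pp by simp
  qed
  have measD0: "emeasure lebesgue D0 = of_nat k * emeasure lebesgue P"
  proof -
    have disj: "disjoint_family_on (\<lambda>r. (+) r ` P) R"
      unfolding disjoint_family_on_def
    proof (intro ballI impI)
      fix r r' assume rr: "r \<in> R" "r' \<in> R" "r \<noteq> r'"
      show "(+) r ` P \<inter> (+) r' ` P = {}"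
      proof (rule ccontr)
        assume "(+) r ` P \<inter> (+) r' ` P \<noteq> {}"
        then obtain p p' where pp: "p \<in> P" "p' \<in> P" "r + p = r' + p'" by auto
        then have "p = p'" using unP[of p p' r r'] RL rr by (auto simp: add.commute)
        then show False using pp rr by simp
      qed
    qed
    have "emeasure lebesgue D0 = (\<Sum>r\<in>R. emeasure lebesgue ((+) r ` P))"
      unfolding D0_def by (rule sum_emeasure[symmetric]) (use Psets sets_transl disj finR in auto)
    also have "\<dots> = of_nat k * emeasure lebesgue P" by (simp add: emeasure_transl cardR)
    finally show ?thesis .
  qed
  obtain W0 where W0: "fdom L0 W0" "W0 \<subseteq> cball 0 \<nu>0" "emeasure lebesgue W0 = emeasure lebesgue D0"
    using reduce_fdom[OF add0 neg0 fL0(4) fdD0 \<nu>0(2)] by blast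
  define Aa where "Aa = (b0 - 2 * \<nu>0) ^ n"
  have "b0 - 2 * \<nu>0 > 0" using b0 by linarith
  then have Aapos: "Aa > 0" unfolding Aa_def by simp
  define p where "p = map_pmf (coset_of L0) (pmf_of_set X)"
  define Fc where "Fc c = {x \<in> X. coset_of L0 x = c}" for c
  have pmfp: "pmf p c = real (card (Fc c)) / real N" for c
  proof -
    have "pmf p c = measure_pmf.prob (pmf_of_set X) (coset_of L0 -` {c})"
      unfolding p_def by (rule pmf_map)
    also have "\<dots> = real (card (X \<inter> coset_of L0 -` {c})) / real (card X)"
      by (rule measure_pmf_of_set[OF Xne finX])
    also have "X \<inter> coset_of L0 -` {c} = Fc c" unfolding Fc_def by auto
    finally show ?thesis unfolding N_def .
  qed
  have lower: "Aa \<le> real (card (Fc c)) * (real k * v)" if c: "c \<in> Q" for c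
  proof -
    define a where "a = rep c"
    have a: "a \<in> L" "coset_of L0 a = c" using rep[OF c] a_def by auto
    have finF: "finite (Fc c)" unfolding Fc_def using finX by simp
    have cond: "a + \<mu> \<in> Fc c" if "\<mu> \<in> L0" "\<forall>i. 0 < (a + \<mu>)$i \<and> (a + \<mu>)$i < b0" for \<mu>
    proof -
      have "a + \<mu> \<in> L" using fL(2) a(1) that(1) assms(3) by blast
      moreover have "a + \<mu> \<in> half_open_box b0" using that(2) unfolding half_open_box_def by (auto simp: less_imp_le)
      moreover have "coset_of L0 (a + \<mu>) = coset_of L0 a" using ceq[of "a + \<mu>" a] that(1) by simp
      then have "coset_of L0 (a + \<mu>) = c" using a(2) by simp
      ultimately show ?thesis unfolding Fc_def X_def by blast
    qed
    have "emeasure lebesgue (box ((\<chi> i. \<nu>0)::real^'n) (\<chi> i. b0 - \<nu>0)) \<le> of_nat (card (Fc c)) * emeasure lebesgue W0"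
      by (rule covering[OF W0(1) W0(2) finF cond])
    also have "\<dots> = ennreal (real (card (Fc c)) * (real k * v))"
      using W0(3) measD0 v vpos by (simp add: ennreal_nat_mult mult.assoc)
    finally have le1: "emeasure lebesgue (box ((\<chi> i. \<nu>0)::real^'n) (\<chi> i. b0 - \<nu>0)) \<le> ennreal (real (card (Fc c)) * (real k * v))" .
    have "emeasure lebesgue (box ((\<chi> i. \<nu>0)::real^'n) (\<chi> i. b0 - \<nu>0)) = ennreal ((b0 - \<nu>0 - \<nu>0) ^ CARD('n))"
      by (rule emeasure_box_cube) (use b0 in linarith)
    also have "(b0 - \<nu>0 - \<nu>0) ^ CARD('n) = Aa" unfolding Aa_def n_def by (simp add: algebra_simps)
    finally have "ennreal Aa \<le> ennreal (real (card (Fc c)) * (real k * v))" using le1 by simp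
    then show ?thesis using vpos by (simp add: ennreal_le_iff)
  qed
  define r where "r = Aa / C"
  have pbound: "r / real k \<le> pmf p c" if c: "c \<in> Q" for c
  proof -
    define F where "F = real (card (Fc c))"
    have lo: "Aa \<le> F * (real k * v)" using lower[OF c] F_def by simp
    have F0: "F \<ge> 0" unfolding F_def by simp
    have "r / real k = Aa / (C * real k)" unfolding r_def by simp
    also have "\<dots> \<le> F * (real k * v) / (C * real k)"
      using lo Cpos kpos by (intro divide_right_mono) auto
    also have "\<dots> = F * v / C" using kpos by simp
    also have "\<dots> \<le> F * v / (real N * v)"
      using upper Npos vpos F0 Cpos by (intro divide_left_mono) auto
    also have "\<dots> = F / real N" using vpos by simp
    finally show ?thesis using pmfp F_def by simp
  qed
  have r1: "r \<le> 1"
  proof -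
    have "Aa \<le> C" unfolding Aa_def C_def using b0 \<nu>(1) \<nu>0(1) by (intro power_mono) auto
    then show ?thesis unfolding r_def using Cpos by simp
  qed
  define q where "q = pmf_of_set Q"
  have setp: "set_pmf p \<subseteq> Q" unfolding p_def QL using finX Xne X_def by auto
  have probp: "measure_pmf.prob p A = (\<Sum>c\<in>A \<inter> Q. pmf p c)" for A
  proof -
    have "measure_pmf.prob p A = measure_pmf.prob p (A \<inter> set_pmf p)" by (simp add: measure_Int_set_pmf)
    also have "A \<inter> set_pmf p = (A \<inter> Q) \<inter> set_pmf p" using setp by auto
    also have "measure_pmf.prob p \<dots> = measure_pmf.prob p (A \<inter> Q)" by (simp add: measure_Int_set_pmf)
    also have "\<dots> = (\<Sum>c\<in>A \<inter> Q. pmf p c)" using finQ by (simp add: measure_measure_pmf_finite)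
    finally show ?thesis .
  qed
  have probq: "measure_pmf.prob q A = (\<Sum>c\<in>A \<inter> Q. 1 / real k)" for A
  proof -
    have "measure_pmf.prob q A = real (card (Q \<inter> A)) / real k"
      unfolding q_def k_def by (rule measure_pmf_of_set[OF Qne finQ])
    also have "\<dots> = (\<Sum>c\<in>A \<inter> Q. 1 / real k)" by (simp add: Int_commute)
    finally show ?thesis .
  qed
  have b1: "measure_pmf.prob q A - measure_pmf.prob p A \<le> 1 - r" for A
  proof -
    have "measure_pmf.prob q A - measure_pmf.prob p A = (\<Sum>c\<in>A \<inter> Q. 1 / real k - pmf p c)"
      by (simp add: probp probq sum_subtractf)
    also have "\<dots> \<le> (\<Sum>c\<in>A \<inter> Q. 1 / real k - r / real k)"
      using pbound by (intro sum_mono) auto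
    also have "\<dots> = real (card (A \<inter> Q)) * ((1 - r) / real k)" by (simp add: diff_divide_distrib)
    also have "\<dots> \<le> real k * ((1 - r) / real k)"
    proof (rule mult_right_mono)
      show "real (card (A \<inter> Q)) \<le> real k" unfolding k_def using finQ by (simp add: card_mono)
      show "0 \<le> (1 - r) / real k" using r1 by simp
    qed
    also have "\<dots> = 1 - r" using kpos by simp
    finally show ?thesis .
  qed
  have b2: "measure_pmf.prob p A - measure_pmf.prob q A \<le> 1 - r" for A
  proof -
    have "measure_pmf.prob p (UNIV - A) = 1 - measure_pmf.prob p A"
      using measure_pmf.prob_compl[of A p] by simp
    moreover have "measure_pmf.prob q (UNIV - A) = 1 - measure_pmf.prob q A"
      using measure_pmf.prob_compl[of A q] by simp
    ultimately show ?thesis using b1[of "UNIV - A"] by simp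
  qed
  have "tv_dist p q \<le> 1 - r"
    unfolding tv_dist_def
    by (rule cSUP_least) (use b1 b2 in \<open>auto simp: abs_le_iff\<close>)
  then show ?thesis
    unfolding p_def q_def X_def Q_def r_def Aa_def C_def n_def \<nu>_def \<nu>0_def .
qed

end
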